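(* Let $\mathscr T$ be a functor satisfying (T1)–(T4), let $\mathcal M_1,\mathcal M_2$ be complete orthomodular lattices and $k\colon\mathcal M_1\to\mathcal M_2$ an ortholattice isomorphism. Then the map $\Gamma(k)\colon\Gamma(\mathcal M_1)\to\Gamma(\mathcal M_2)$, $\Gamma(k)(A)=\{k\circ a\circ k^{-1}\mid a\in A\}$, is a $\mathscr T\mathbb{ODA}$-morphism, i.e. a bijective morphism of involutive generalized dynamic algebras.
   Context: $\Gamma(\mathcal M)=\mathscr P(\mathscr T(\mathbf{Lin}(\mathcal M)))$. An involutive unital quantale is $(Q,\bigsqcup,\odot,{}^*,e)$: complete join-semilattice $Q$, associative $\odot$ distributing over arbitrary joins in each argument, unit $e$, ${}^*$ with $x^{**}=x$, $(x\odot y)^*=y^*\odot x^*$, $(\bigsqcup x_i)^*=\bigsqcup x_i^*$. An involutive generalized dynamic algebra (IDA) is such a quantale with ${\sim}\colon K\to K$ satisfying, for all $x,y$ and families $(x_i)$: ${\sim}(x\odot{\sim}{\sim}y)={\sim}(x\odot y)$; ${\sim}(\bigsqcup{\sim}{\sim}x_i)={\sim}(\bigsqcup x_i)$; $({\sim}x)^*={\sim}x$; ${\sim}{\sim}({\sim}{\sim}x\odot y)={\sim}({\sim}x\sqcup{\sim}({\sim}x\sqcup y))$. Test set $\widetilde K=\{{\sim}k\}$; $\bigvee W={\sim}{\sim}\bigsqcup W$; $w^\perp={\sim}w$; $k\preceq l$ iff $\bigvee\{k,l\}=l$; $k\bullet v={\sim}{\sim}(k\odot v)$; $k\equiv l$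 iff $k\bullet w=l\bullet w$ for all $w\in\widetilde K$. A morphism of IDAs preserves arbitrary joins, $\odot$, ${}^*$, unit, ${\sim}$ (category $\mathbb{IDA}$); semi-Foulis means $(\widetilde K,\preceq,{}^\perp)$ is a complete orthomodular lattice. $\mathbb{IM}$: involutive monoids and homomorphisms. For a complete orthomodular lattice $\mathcal M$: $\pi_m(x)=m\wedge(m^\perp\vee x)$; $\mathbf{Lin}(\mathcal M)$ is the set of maps $f$ admitting $f^*$ with $f(x)\le y^\perp\iff x\le f^*(y)^\perp$, an IDA under pointwise joins, composition, ${}^*$, $\mathrm{id}$, ${\sim}f=\pi_{f(1)^\perp}$. For an involutive submonoid $L\supseteq\{\pi_m\}$, $\mathscr P(L)$ is the IDA of subsets of $L$ with union, setwise composition $A\odot B=\{a\circ b\}$, $A^*=\{a^*\}$, unit $\{\mathrm{id}_M\}$, ${\sim}A=\{\pi_{(\bigvee_{a\in A}a(1))^\perp}\}$. $\mathscr T\colon\mathbb{IDA}\to\mathbb{IM}$ satisfies: (T1) $\widetilde K\subseteq\mathscr T(K)\subseteq K$, $\mathscr T(K)$ an involutive submonoid; (T2) for semi-Foulis $\mathfrak K$ with $s=t\iff s\equiv t$ on $\mathscr T(K)$, $k\mapsto k\bullet(-)$ is an isomorphism $\mathscr T(\mathfrak K)\to\mathscr T(\mathbf{Lin}(\widetilde{\mathfrak K}))$; (T3) $f\mapsto\{f\}$ is an isomorphism $\mathscr T(\mathbf{Lin}(\mathcal M))\to\mathscr T(\mathscr P(\mathscr T(\mathbf{Lin}(\mathcal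 M))))$; (T4) $\mathscr T(f)$ is the restriction of $f$. An ortholattice isomorphism is a bijection $g$ with $m\le n\iff g(m)\le g(n)$ and $g(m^\perp)=g(m)^\perp$. *)

theory Defs
  imports Main
begin

definition complete_oml :: "('a::complete_lattice \<Rightarrow> 'a) \<Rightarrow> bool" where
  "complete_oml perp \<longleftrightarrow>
     (\<forall>x. perp (perp x) = x) \<and>
     (\<forall>x y. x \<le> y \<longrightarrow> perp y \<le> perp x) \<and>
     (\<forall>x. inf x (perp x) = bot) \<and>
     (\<forall>x. sup x (perp x) = top) \<and>
     (\<forall>x y. x \<le> y \<longrightarrow> y = sup x (inf y (perp x)))"

definition ortho_iso :: "('a::complete_lattice \<Rightarrow> 'a) \<Rightarrow> ('b::complete_lattice \<Rightarrow> 'b) \<Rightarrow> ('a \<Rightarrow> 'b) \<Rightarrow> bool" where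
  "ortho_iso perp1 perp2 g \<longleftrightarrow> bij g \<and> (\<forall>m n. m \<le> n \<longleftrightarrow> g m \<le> g n) \<and> (\<forall>m. g (perp1 m) = perp2 (g m))"

definition sasaki :: "('a::complete_lattice \<Rightarrow> 'a) \<Rightarrow> 'a \<Rightarrow> 'a \<Rightarrow> 'a" where
  "sasaki perp m x = inf m (sup (perp m) x)"

definition is_adjoint :: "('a::complete_lattice \<Rightarrow> 'a) \<Rightarrow> ('a \<Rightarrow> 'a) \<Rightarrow> ('a \<Rightarrow> 'a) \<Rightarrow> bool" where
  "is_adjoint perp f g \<longleftrightarrow> (\<forall>x y. f x \<le> perp y \<longleftrightarrow> x \<le> perp (g y))"

definition is_Lin :: "('a::complete_lattice \<Rightarrow> 'a) \<Rightarrow> ('a \<Rightarrow> 'a) \<Rightarrow> bool" where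
  "is_Lin perp f \<longleftrightarrow> (\<exists>g. is_adjoint perp f g)"

definition adj :: "('a::complete_lattice \<Rightarrow> 'a) \<Rightarrow> ('a \<Rightarrow> 'a) \<Rightarrow> ('a \<Rightarrow> 'a)" where
  "adj perp f = (SOME g. is_adjoint perp f g)"

record 'k ida =
  ida_carrier :: "'k set"
  ida_join :: "'k set \<Rightarrow> 'k"
  ida_mult :: "'k \<Rightarrow> 'k \<Rightarrow> 'k"
  ida_star :: "'k \<Rightarrow> 'k"
  ida_unit :: 'k
  ida_tilde :: "'k \<Rightarrow> 'k"

definition ida_hom :: "'k ida \<Rightarrow> 'l ida \<Rightarrow> ('k \<Rightarrow> 'l) \<Rightarrow> bool" where
  "ida_hom K L h \<longleftrightarrow>
     (\<forall>x\<in>ida_carrier K. h x \<in> ida_carrier L) \<and>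
     (\<forall>S. S \<subseteq> ida_carrier K \<longrightarrow> h (ida_join K S) = ida_join L (h ` S)) \<and>
     (\<forall>x\<in>ida_carrier K. \<forall>y\<in>ida_carrier K. h (ida_mult K x y) = ida_mult L (h x) (h y)) \<and>
     (\<forall>x\<in>ida_carrier K. h (ida_star K x) = ida_star L (h x)) \<and>
     h (ida_unit K) = ida_unit L \<and>
     (\<forall>x\<in>ida_carrier K. h (ida_tilde K x) = ida_tilde L (h x))"

definition tests :: "'k ida \<Rightarrow> 'k set" where
  "tests K = ida_tilde K ` ida_carrier K"

definition Lin :: "('a::complete_lattice \<Rightarrow> 'a) \<Rightarrow> ('a \<Rightarrow> 'a) ida" where
  "Lin perp = \<lparr> ida_carrier = {f. is_Lin perp f},
               ida_join = (\<lambda>F. (\<lambda>x. SUP f\<in>F. f x)),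
               ida_mult = (\<circ>),
               ida_star = adj perp,
               ida_unit = id,
               ida_tilde = (\<lambda>f. sasaki perp (perp (f top))) \<rparr>"

text \<open>The IDA P(L) of subsets of an involutive submonoid L of Lin(M).\<close>
definition Pset :: "('a::complete_lattice \<Rightarrow> 'a) \<Rightarrow> ('a \<Rightarrow> 'a) set \<Rightarrow> ('a \<Rightarrow> 'a) set ida" where
  "Pset perp L = \<lparr> ida_carrier = Pow L,
               ida_join = Union,
               ida_mult = (\<lambda>A B. {a \<circ> b | a b. a \<in> A \<and> b \<in> B}),
               ida_star = (\<lambda>A. adj perp ` A),
               ida_unit = {id},
               ida_tilde = (\<lambda>A. {sasaki perp (perp (SUP a\<in>A. a top))}) \<rparr>"

text \<open>Condition (T1) for the value TK of the functor at K.\<close>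
definition T1_at :: "'k ida \<Rightarrow> 'k set \<Rightarrow> bool" where
  "T1_at K TK \<longleftrightarrow> tests K \<subseteq> TK \<and> TK \<subseteq> ida_carrier K \<and>
     ida_unit K \<in> TK \<and>
     (\<forall>x\<in>TK. \<forall>y\<in>TK. ida_mult K x y \<in> TK) \<and>
     (\<forall>x\<in>TK. ida_star K x \<in> TK)"

text \<open>Functoriality with (T4) between K and L: for every IDA morphism h : K \<rightarrow> L,
  T(h) is the restriction of h, a monoid morphism T(K) \<rightarrow> T(L); in particular h maps T(K) into T(L).\<close>
definition T4_between :: "'k ida \<Rightarrow> 'k set \<Rightarrow> 'l ida \<Rightarrow> 'l set \<Rightarrow> bool" where
  "T4_between K TK L TL \<longleftrightarrow> (\<forall>h. ida_hom K L h \<longrightarrow> h ` TK \<subseteq> TL)"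

definition Gamma_map :: "('a \<Rightarrow> 'b) \<Rightarrow> ('a \<Rightarrow> 'a) set \<Rightarrow> ('b \<Rightarrow> 'b) set" where
  "Gamma_map k A = (\<lambda>a. k \<circ> a \<circ> inv k) ` A"

end

theory Submission
  imports Defs
begin

lemma oi_le: "ortho_iso p1 p2 k \<Longrightarrow> (k m \<le> k n) = (m \<le> n)"
  unfolding ortho_iso_def by blast

lemma oi_perp: "ortho_iso p1 p2 k \<Longrightarrow> k (p1 m) = p2 (k m)"
  unfolding ortho_iso_def by blast

lemma oi_bij: "ortho_iso p1 p2 k \<Longrightarrow> bij k"
  unfolding ortho_iso_def by blast

lemma oi_kinv: "ortho_iso p1 p2 k \<Longrightarrow> k (inv k x) = x"
  by (simp add: bij_is_surj oi_bij surj_f_inv_f)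

lemma oi_invk: "ortho_iso p1 p2 k \<Longrightarrow> inv k (k x) = x"
  by (simp add: bij_is_inj oi_bij)

lemma oi_Sup:
  assumes "ortho_iso p1 p2 k" shows "k (Sup A) = Sup (k ` A)"
proof (rule antisym)
  show "Sup (k ` A) \<le> k (Sup A)"
    by (rule Sup_least) (auto simp: oi_le[OF assms] Sup_upper)
  obtain t where t: "Sup (k ` A) = k t" using oi_kinv[OF assms] by metis
  have "\<And>a. a \<in> A \<Longrightarrow> a \<le> t"
    by (metis Sup_upper imageI oi_le[OF assms] t)
  then have "Sup A \<le> t" by (rule Sup_least)
  then show "k (Sup A) \<le> Sup (k ` A)" using t oi_le[OF assms] by metis
qed

lemma oi_Inf:
  assumes "ortho_iso p1 p2 k" shows "k (Inf A) = Inf (k ` A)"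
proof (rule antisym)
  show "k (Inf A) \<le> Inf (k ` A)"
    by (rule Inf_greatest) (auto simp: oi_le[OF assms] Inf_lower)
  obtain t where t: "Inf (k ` A) = k t" using oi_kinv[OF assms] by metis
  have "\<And>a. a \<in> A \<Longrightarrow> t \<le> a"
    by (metis Inf_lower imageI oi_le[OF assms] t)
  then have "t \<le> Inf A" by (rule Inf_greatest)
  then show "Inf (k ` A) \<le> k (Inf A)" using t oi_le[OF assms] by metis
qed

lemma oi_sup: "ortho_iso p1 p2 k \<Longrightarrow> k (sup x y) = sup (k x) (k y)"
  using oi_Sup[of p1 p2 k "{x,y}"] by simp

lemma oi_inf: "ortho_iso p1 p2 k \<Longrightarrow> k (inf x y) = inf (k x) (k y)"
  using oi_Inf[of p1 p2 k "{x,y}"] by simp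

lemma oi_top: assumes "ortho_iso p1 p2 k" shows "k top = top"
proof -
  have "k (Sup UNIV) = Sup (range k)" by (rule oi_Sup[OF assms])
  moreover have "range k = UNIV" using oi_bij[OF assms] by (simp add: bij_is_surj)
  ultimately show ?thesis by simp
qed

lemma oi_inv_top: "ortho_iso p1 p2 k \<Longrightarrow> inv k top = top"
  by (metis oi_invk oi_top)

lemma oi_inv: assumes "ortho_iso p1 p2 k" shows "ortho_iso p2 p1 (inv k)"
  unfolding ortho_iso_def
proof (intro conjI allI)
  show "bij (inv k)" using oi_bij[OF assms] by (simp add: bij_imp_bij_inv)
  fix m n
  have "(m \<le> n) = (k (inv k m) \<le> k (inv k n))" by (simp add: oi_kinv[OF assms])
  then show "(m \<le> n) = (inv k m \<le> inv k n)" by (simp add: oi_le[OF assms])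
  have "k (p1 (inv k m)) = p2 m" by (simp add: oi_perp[OF assms] oi_kinv[OF assms])
  then show "inv k (p2 m) = p1 (inv k m)" by (metis oi_invk[OF assms])
qed

lemma oi_sasaki: assumes "ortho_iso p1 p2 k"
  shows "k (sasaki p1 m x) = sasaki p2 (k m) (k x)"
  unfolding sasaki_def by (simp add: oi_inf[OF assms] oi_sup[OF assms] oi_perp[OF assms])

lemma oi_adjoint: assumes "ortho_iso p1 p2 k" and "is_adjoint p1 f g"
  shows "is_adjoint p2 (k \<circ> f \<circ> inv k) (k \<circ> g \<circ> inv k)"
  unfolding is_adjoint_def
proof (intro allI)
  fix x y
  have "((k \<circ> f \<circ> inv k) x \<le> p2 y) = (k (f (inv k x)) \<le> k (p1 (inv k y)))"
    by (simp add: oi_perp[OF assms(1)] oi_kinv[OF assms(1)])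
  also have "\<dots> = (f (inv k x) \<le> p1 (inv k y))" by (simp add: oi_le[OF assms(1)])
  also have "\<dots> = (inv k x \<le> p1 (g (inv k y)))" using assms(2) unfolding is_adjoint_def by blast
  also have "\<dots> = (k (inv k x) \<le> k (p1 (g (inv k y))))" by (simp add: oi_le[OF assms(1)])
  also have "\<dots> = (x \<le> p2 ((k \<circ> g \<circ> inv k) y))"
    by (simp add: oi_perp[OF assms(1)] oi_kinv[OF assms(1)])
  finally show "((k \<circ> f \<circ> inv k) x \<le> p2 y) = (x \<le> p2 ((k \<circ> g \<circ> inv k) y))" .
qed

lemma adjoint_unique: assumes "\<forall>x. p (p x) = x" "is_adjoint p f g" "is_adjoint p f g'"
  shows "g = g'"
proof
  fix y
  have "\<And>x. (x \<le> p (g y)) = (x \<le> p (g' y))" using assms(2,3) unfolding is_adjoint_def by blast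
  then have "p (g y) = p (g' y)" by (meson order_antisym order_refl)
  then show "g y = g' y" by (metis assms(1))
qed

lemma adj_is: "is_Lin p f \<Longrightarrow> is_adjoint p f (adj p f)"
  unfolding is_Lin_def adj_def by (erule someI_ex)

lemma oi_adj: assumes "ortho_iso p1 p2 k" "\<forall>x. p2 (p2 x) = x" "is_Lin p1 f"
  shows "k \<circ> adj p1 f \<circ> inv k = adj p2 (k \<circ> f \<circ> inv k)"
proof -
  have a: "is_adjoint p2 (k \<circ> f \<circ> inv k) (k \<circ> adj p1 f \<circ> inv k)"
    by (rule oi_adjoint[OF assms(1) adj_is[OF assms(3)]])
  then have "is_Lin p2 (k \<circ> f \<circ> inv k)" unfolding is_Lin_def by blast
  then show ?thesis using adjoint_unique[OF assms(2) a adj_is] by blast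
qed

lemma oi_conj_comp: assumes "ortho_iso p1 p2 k"
  shows "k \<circ> (f \<circ> g) \<circ> inv k = (k \<circ> f \<circ> inv k) \<circ> (k \<circ> g \<circ> inv k)"
  by (auto simp: oi_invk[OF assms])

lemma oi_conj_id: assumes "ortho_iso p1 p2 k" shows "k \<circ> id \<circ> inv k = id"
  by (auto simp: oi_kinv[OF assms])

lemma oi_conj_top: assumes "ortho_iso p1 p2 k" shows "(k \<circ> f \<circ> inv k) top = k (f top)"
  by (simp add: oi_inv_top[OF assms])

lemma oi_Lin_hom: assumes "ortho_iso p1 p2 k" "\<forall>x. p2 (p2 x) = x"
  shows "ida_hom (Lin p1) (Lin p2) (\<lambda>f. k \<circ> f \<circ> inv k)"
  unfolding ida_hom_def Lin_def
proof (simp, intro conjI allI impI ballI)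
  fix x assume "is_Lin p1 x"
  then show "is_Lin p2 (k \<circ> x \<circ> inv k)"
    unfolding is_Lin_def using oi_adjoint[OF assms(1)] by blast
next
  fix S :: "('a \<Rightarrow> 'a) set"
  show "k \<circ> (\<lambda>x. SUP f\<in>S. f x) \<circ> inv k = (\<lambda>x. SUP f\<in>(\<lambda>f. k \<circ> f \<circ> inv k) ` S. f x)"
    by (auto simp: oi_Sup[OF assms(1)] image_image)
next
  fix x y :: "'a \<Rightarrow> 'a"
  show "k \<circ> (x \<circ> y) \<circ> inv k = k \<circ> x \<circ> inv k \<circ> (k \<circ> y \<circ> inv k)"
    using oi_conj_comp[OF assms(1)] by (simp add: comp_assoc)
next
  fix x assume "is_Lin p1 x"
  then show "k \<circ> adj p1 x \<circ> inv k = adj p2 (k \<circ> x \<circ> inv k)" by (rule oi_adj[OF assms])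
next
  show "k \<circ> inv k = id" by (auto simp: oi_kinv[OF assms(1)])
next
  fix x :: "'a \<Rightarrow> 'a"
  show "k \<circ> sasaki p1 (p1 (x top)) \<circ> inv k = sasaki p2 (p2 (k (x (inv k top))))"
  proof
    fix z
    show "(k \<circ> sasaki p1 (p1 (x top)) \<circ> inv k) z = sasaki p2 (p2 (k (x (inv k top)))) z"
      by (simp add: oi_sasaki[OF assms(1)] oi_perp[OF assms(1)] oi_kinv[OF assms(1)]
          oi_inv_top[OF assms(1)])
  qed
qed


lemma oi_conj_sasaki: assumes "ortho_iso p1 p2 k"
  shows "k \<circ> sasaki p1 (p1 m) \<circ> inv k = sasaki p2 (p2 (k m))"
proof
  fix z show "(k \<circ> sasaki p1 (p1 m) \<circ> inv k) z = sasaki p2 (p2 (k m)) z"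
    by (simp add: oi_sasaki[OF assms] oi_perp[OF assms] oi_kinv[OF assms])
qed

lemma oi_SUP_top: assumes "ortho_iso p1 p2 k"
  shows "(SUP a\<in>(\<lambda>f. k \<circ> f \<circ> inv k) ` A. a top) = k (SUP a\<in>A. a top)"
  by (simp add: oi_Sup[OF assms] image_image oi_inv_top[OF assms])

lemma oi_mult_img: assumes "ortho_iso p1 p2 k"
  shows "(\<lambda>f. k \<circ> f \<circ> inv k) ` {a \<circ> b |a b. a \<in> A \<and> b \<in> B}
     = {a \<circ> b |a b. a \<in> (\<lambda>f. k \<circ> f \<circ> inv k) ` A \<and> b \<in> (\<lambda>f. k \<circ> f \<circ> inv k) ` B}"
proof (rule set_eqI, rule iffI)
  fix z assume "z \<in> (\<lambda>f. k \<circ> f \<circ> inv k) ` {a \<circ> b |a b. a \<in> A \<and> b \<in> B}"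
  then obtain a b where ab: "a \<in> A" "b \<in> B" "z = k \<circ> (a \<circ> b) \<circ> inv k" by blast
  then have "z = (k \<circ> a \<circ> inv k) \<circ> (k \<circ> b \<circ> inv k)" using oi_conj_comp[OF assms] by simp
  then show "z \<in> {a \<circ> b |a b. a \<in> (\<lambda>f. k \<circ> f \<circ> inv k) ` A \<and> b \<in> (\<lambda>f. k \<circ> f \<circ> inv k) ` B}"
    using ab by blast
next
  fix z assume "z \<in> {a \<circ> b |a b. a \<in> (\<lambda>f. k \<circ> f \<circ> inv k) ` A \<and> b \<in> (\<lambda>f. k \<circ> f \<circ> inv k) ` B}"
  then obtain a b where ab: "a \<in> A" "b \<in> B" "z = (k \<circ> a \<circ> inv k) \<circ> (k \<circ> b \<circ> inv k)" by blast
  then have "z = k \<circ> (a \<circ> b) \<circ> inv k" using oi_conj_comp[OF assms] by simp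
  then show "z \<in> (\<lambda>f. k \<circ> f \<circ> inv k) ` {a \<circ> b |a b. a \<in> A \<and> b \<in> B}"
    using ab by blast
qed

theorem lemma5p2:
  fixes perp1 :: "'a::complete_lattice \<Rightarrow> 'a"
    and perp2 :: "'b::complete_lattice \<Rightarrow> 'b"
    and TL1 :: "('a \<Rightarrow> 'a) set"
    and TL2 :: "('b \<Rightarrow> 'b) set"
    and k :: "'a \<Rightarrow> 'b"
  assumes M1: "complete_oml perp1"
    and M2: "complete_oml perp2"
    and T1_1: "T1_at (Lin perp1) TL1"
    and T1_2: "T1_at (Lin perp2) TL2"
    and T4_11: "T4_between (Lin perp1) TL1 (Lin perp1) TL1"
    and T4_12: "T4_between (Lin perp1) TL1 (Lin perp2) TL2"
    and T4_21: "T4_between (Lin perp2) TL2 (Lin perp1) TL1"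
    and T4_22: "T4_between (Lin perp2) TL2 (Lin perp2) TL2"
    and iso: "ortho_iso perp1 perp2 k"
  shows "ida_hom (Pset perp1 TL1) (Pset perp2 TL2) (Gamma_map k)
       \<and> bij_betw (Gamma_map k) (ida_carrier (Pset perp1 TL1)) (ida_carrier (Pset perp2 TL2))"
proof -
  let ?h = "\<lambda>f. k \<circ> f \<circ> inv k"
  let ?g = "\<lambda>f. inv k \<circ> f \<circ> k"
  have inv1: "\<forall>x. perp1 (perp1 x) = x" using M1 unfolding complete_oml_def by blast
  have inv2: "\<forall>x. perp2 (perp2 x) = x" using M2 unfolding complete_oml_def by blast
  have G: "Gamma_map k = image ?h" by (rule ext) (simp add: Gamma_map_def)
  have TL1L: "\<And>f. f \<in> TL1 \<Longrightarrow> is_Lin perp1 f" using T1_1 unfolding T1_at_def Lin_def by auto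
  have h12: "?h ` TL1 \<subseteq> TL2" by (rule T4_12[unfolded T4_between_def, rule_format, OF oi_Lin_hom[OF iso inv2]])
  have iik: "inv (inv k) = k" using oi_bij[OF iso] by (simp add: inv_inv_eq)
  have h21: "?g ` TL2 \<subseteq> TL1" using T4_21[unfolded T4_between_def, rule_format, OF oi_Lin_hom[OF oi_inv[OF iso] inv1]] unfolding iik .
  have hg: "\<And>f. ?h (?g f) = f" by (auto simp: oi_kinv[OF iso])
  have gh: "\<And>f. ?g (?h f) = f" by (auto simp: oi_invk[OF iso])
  have injh: "inj ?h" by (rule inj_on_inverseI[of _ ?g]) (rule gh)
  have hom: "ida_hom (Pset perp1 TL1) (Pset perp2 TL2) (Gamma_map k)"
    unfolding ida_hom_def Pset_def G ida.select_convs
  proof (intro conjI allI impI ballI)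
    fix x assume "x \<in> Pow TL1" then show "?h ` x \<in> Pow TL2" using h12 by blast
  next
    fix S :: "('a \<Rightarrow> 'a) set set"
    show "?h ` \<Union>S = \<Union>(image ?h ` S)" by (rule image_Union)
  next
    fix x y show "?h ` {a \<circ> b |a b. a \<in> x \<and> b \<in> y} = {a \<circ> b |a b. a \<in> ?h ` x \<and> b \<in> ?h ` y}"
      by (rule oi_mult_img[OF iso])
  next
    fix x assume "x \<in> Pow TL1"
    then have x: "x \<subseteq> TL1" by simp
    have "?h ` adj perp1 ` x = (\<lambda>f. ?h (adj perp1 f)) ` x" by (simp add: image_image)
    also have "\<dots> = (\<lambda>f. adj perp2 (?h f)) ` x"
      using x TL1L oi_adj[OF iso inv2] by (intro image_cong) auto
    also have "\<dots> = adj perp2 ` ?h ` x" by (simp add: image_image)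
    finally show "?h ` adj perp1 ` x = adj perp2 ` ?h ` x" .
  next
    show "?h ` {id} = {id}" using oi_conj_id[OF iso] by simp
  next
    fix x :: "('a \<Rightarrow> 'a) set"
    show "?h ` {sasaki perp1 (perp1 (SUP a\<in>x. a top))} = {sasaki perp2 (perp2 (SUP a\<in>?h ` x. a top))}"
      by (simp only: image_insert image_empty oi_SUP_top[OF iso] oi_conj_sasaki[OF iso])
  qed
  have bij: "bij_betw (Gamma_map k) (ida_carrier (Pset perp1 TL1)) (ida_carrier (Pset perp2 TL2))"
    unfolding Pset_def G ida.select_convs
  proof (rule bij_betw_imageI)
    show "inj_on (image ?h) (Pow TL1)" using injh by (auto intro!: inj_onI simp: inj_image_eq_iff)
    show "image ?h ` Pow TL1 = Pow TL2"
    proof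
      show "image ?h ` Pow TL1 \<subseteq> Pow TL2" using h12 by blast
      show "Pow TL2 \<subseteq> image ?h ` Pow TL1"
      proof
        fix B assume B: "B \<in> Pow TL2"
        have "B = ?h ` (?g ` B)" by (simp add: image_image hg)
        moreover have "?g ` B \<in> Pow TL1" using B h21 by blast
        ultimately show "B \<in> image ?h ` Pow TL1" by blast
      qed
    qed
  qed
  show ?thesis using hom bij by blast
qed


end
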